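(* If a $2$-step nilpotent real Lie algebra $\mathfrak{n}$ admits a $3$-step complex structure, then $\dim[\mathfrak{n},\mathfrak{n}]\geq3$.
   Context: A complex structure on a real Lie algebra $\mathfrak{g}$ is a linear map $J:\mathfrak{g}\to\mathfrak{g}$ with $J^2=-I$ and $N_J(x,y):=[x,y]+J([Jx,y]+[x,Jy])-[Jx,Jy]=0$ for all $x,y\in\mathfrak{g}$. Given such $J$, define inductively $\mathfrak{a}_0(J)=0$ and $\mathfrak{a}_\ell(J)=\{x\in\mathfrak{g}: [x,\mathfrak{g}]\subset\mathfrak{a}_{\ell-1}(J)\text{ and }[Jx,\mathfrak{g}]\subset\mathfrak{a}_{\ell-1}(J)\}$ for $\ell\ge1$. $J$ is called nilpotent if $\mathfrak{a}_t(J)=\mathfrak{g}$ for some positive integer $t$, and $t$-step if $t$ is the smallest such integer. A Lie algebra $\mathfrak{n}$ is $2$-step nilpotent if it is non-abelian and $[\mathfrak{n},\mathfrak{n}]\subset\mathfrak{z}$ (the center). *)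

theory Defs
  imports "HOL-Analysis.Analysis"
begin

definition lie_algebra :: "('a::real_vector \<Rightarrow> 'a \<Rightarrow> 'a) \<Rightarrow> bool" where
  "lie_algebra br \<longleftrightarrow>
     (\<forall>x. linear (br x)) \<and> (\<forall>y. linear (\<lambda>x. br x y)) \<and>
     (\<forall>x. br x x = 0) \<and>
     (\<forall>x y z. br x (br y z) + br y (br z x) + br z (br x y) = 0)"

definition complex_structure :: "('a::real_vector \<Rightarrow> 'a \<Rightarrow> 'a) \<Rightarrow> ('a \<Rightarrow> 'a) \<Rightarrow> bool" where
  "complex_structure br J \<longleftrightarrow>
     linear J \<and> (\<forall>x. J (J x) = - x) \<and>
     (\<forall>x y. br x y + J (br (J x) y + br x (J y)) - br (J x) (J y) = 0)"

fun asc_series :: "('a::real_vector \<Rightarrow> 'a \<Rightarrow> 'a) \<Rightarrow> ('a \<Rightarrow> 'a) \<Rightarrow> nat \<Rightarrow> 'a set" where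
  "asc_series br J 0 = {0}"
| "asc_series br J (Suc l) =
     {x. (\<forall>y. br x y \<in> asc_series br J l) \<and> (\<forall>y. br (J x) y \<in> asc_series br J l)}"

definition nilpotent_step :: "('a::real_vector \<Rightarrow> 'a \<Rightarrow> 'a) \<Rightarrow> ('a \<Rightarrow> 'a) \<Rightarrow> nat \<Rightarrow> bool" where
  "nilpotent_step br J t \<longleftrightarrow>
     0 < t \<and> asc_series br J t = UNIV \<and> (\<forall>s. 0 < s \<and> s < t \<longrightarrow> asc_series br J s \<noteq> UNIV)"

definition lie_center :: "('a::real_vector \<Rightarrow> 'a \<Rightarrow> 'a) \<Rightarrow> 'a set" where
  "lie_center br = {z. \<forall>x. br z x = 0}"

definition derived_algebra :: "('a::real_vector \<Rightarrow> 'a \<Rightarrow> 'a) \<Rightarrow> 'a set" where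
  "derived_algebra br = span {br x y | x y. True}"

definition two_step_nilpotent :: "('a::real_vector \<Rightarrow> 'a \<Rightarrow> 'a) \<Rightarrow> bool" where
  "two_step_nilpotent br \<longleftrightarrow>
     (\<exists>x y. br x y \<noteq> 0) \<and> derived_algebra br \<subseteq> lie_center br"

end

theory Submission
  imports Defs
begin

theorem mainTheorem6:
  fixes br :: "'a::euclidean_space \<Rightarrow> 'a \<Rightarrow> 'a" and J :: "'a \<Rightarrow> 'a"
  assumes "lie_algebra br"
    and "two_step_nilpotent br"
    and "complex_structure br J"
    and "nilpotent_step br J 3"
  shows "dim (derived_algebra br) \<ge> 3"
proof -
  have linL: "\<And>y. linear (\<lambda>x. br x y)" and linR: "\<And>x. linear (br x)"
    using assms(1) unfolding lie_algebra_def by auto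
  have linJ: "linear J" and JJ: "\<And>x. J (J x) = - x"
    and nij: "\<And>x y. br x y + J (br (J x) y + br x (J y)) - br (J x) (J y) = 0"
    using assms(3) unfolding complex_structure_def by auto
  have cent: "derived_algebra br \<subseteq> lie_center br"
    using assms(2) unfolding two_step_nilpotent_def by auto
  have a3: "asc_series br J 3 = UNIV" and a2: "asc_series br J 2 \<noteq> UNIV"
    using assms(4) unfolding nilpotent_step_def by auto
  define A1 where "A1 = asc_series br J 1"
  have A1: "A1 = {x. (\<forall>y. br x y = 0) \<and> (\<forall>y. br (J x) y = 0)}"
    unfolding A1_def by (simp add: numeral_eq_Suc)
  have a2eq: "asc_series br J 2 = {x. (\<forall>y. br x y \<in> A1) \<and> (\<forall>y. br (J x) y \<in> A1)}"
    unfolding A1_def by (simp add: numeral_eq_Suc)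
  have a3eq: "asc_series br J 3 = {x. (\<forall>y. br x y \<in> asc_series br J 2) \<and> (\<forall>y. br (J x) y \<in> asc_series br J 2)}"
    by (simp add: numeral_eq_Suc)
  have subA1: "subspace A1"
    unfolding subspace_def A1
    by (auto simp: linear_add[OF linL] linear_scale[OF linL] linear_add[OF linJ] linear_scale[OF linJ]
          linear_0[OF linL] linear_0[OF linJ])
  have der: "br x y \<in> derived_algebra br" for x y
    unfolding derived_algebra_def by (rule span_base) blast
  have subD: "subspace (derived_algebra br)"
    unfolding derived_algebra_def by (rule subspace_span)
  obtain x y where nxy: "br x y \<notin> A1"
  proof -
    from a2 obtain x where "x \<notin> asc_series br J 2" by auto
    then show ?thesis using that unfolding a2eq by blast
  qed
  define w where "w = br x y"
  have wc: "\<And>z. br w z = 0" using cent der[of x y] unfolding w_def lie_center_def by auto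
  have wa2: "w \<in> asc_series br J 2" using a3 unfolding a3eq w_def by blast
  have JwA1: "\<And>z. br (J w) z \<in> A1" using wa2 unfolding a2eq by blast
  obtain y0 where v0: "br (J w) y0 \<noteq> 0"
    using nxy wc unfolding A1 w_def[symmetric] by auto
  define v where "v = br (J w) y0"
  have key: "br (J w) (J y0) = J v"
  proof -
    have "br (J w) (J y0) + J (br (J (J w)) (J y0) + br (J w) (J (J y0))) - br (J (J w)) (J (J y0)) = 0"
      by (rule nij)
    moreover have "br (J (J w)) z = 0" for z
      using wc[of z] by (simp add: JJ linear_neg[OF linL])
    ultimately have "br (J w) (J y0) + J (br (J w) (- y0)) = 0" by (simp add: JJ)
    then show ?thesis unfolding v_def by (simp add: linear_neg[OF linR] linear_neg[OF linJ])
  qed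
  have vA: "v \<in> A1" and JvA: "J v \<in> A1" using JwA1 key unfolding v_def by metis+
  have vne: "v \<noteq> 0" using v0 v_def by simp
  have wA: "w \<notin> A1" using nxy w_def by simp
  have sp: "span {v, J v} \<subseteq> A1"
    using vA JvA subA1 by (simp add: span_minimal)
  have wsp: "w \<notin> span {v, J v}" using sp wA by blast
  have Jvsp: "J v \<notin> span {v}"
  proof
    assume "J v \<in> span {v}"
    then obtain c where c: "J v = c *\<^sub>R v" by (auto simp: span_singleton)
    have "- v = J (c *\<^sub>R v)" using c JJ[of v] by simp
    also have "\<dots> = c *\<^sub>R J v" by (simp add: linear_scale[OF linJ])
    also have "\<dots> = (c*c) *\<^sub>R v" using c by simp
    finally have "(c*c + 1) *\<^sub>R v = 0" by (simp add: algebra_simps) (metis add.commute neg_eq_iff_add_eq_0)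
    moreover have "c*c + 1 \<noteq> 0" by (smt (verit) zero_le_square)
    ultimately show False using vne by simp
  qed
  have ne1: "J v \<noteq> v" using Jvsp by (auto intro: span_base)
  have ne2: "w \<noteq> v" "w \<noteq> J v" using wsp by (auto intro: span_base)
  have ind2: "independent {J v, v}"
    using Jvsp vne by (simp add: independent_insert)
  have ind: "independent {w, v, J v}"
  proof -
    have "{v, J v} = {J v, v}" by auto
    then have "independent {v, J v}" using ind2 by simp
    then show ?thesis using wsp independent_insert[of w "{v, J v}"] by auto
  qed
  have card: "card {w, v, J v} = 3" using ne1 ne2 by simp
  have "{w, v, J v} \<subseteq> derived_algebra br"
    using der v_def key w_def by (metis empty_subsetI insert_subset)
  then have "card {w, v, J v} \<le> dim (derived_algebra br)"
    using ind by (rule independent_card_le_dim)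
  then show ?thesis using card by simp
qed

end
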